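(* Under Fisher's null $H_0$, if $\Gamma^\star\preccurlyeq\Gamma\in[1,\infty]^I$ and Conditions A1 and A2($\Gamma$) hold, then $$\tilde p_\Gamma=1-\Phi\Big(\frac{T-\mu(\Gamma)}{\sigma(\Gamma)}\Big)\cdot\mathbb 1\{T\ge\mu(\Gamma)\}$$ satisfies $\limsup_{I\to\infty}\mathbb P(\tilde p_\Gamma\le\alpha)\le\alpha$ for all $\alpha\in(0,1)$.
   Context: Setting: sequence of matched studies indexed by $I\to\infty$; set $i$ has $n_i\ge2$ units; potential outcomes fixed; $Z$ (one treated unit per set) random with true mechanism $\mathbb P(Z=z)=\prod_i\prod_j(p^\star_{ij})^{z_{ij}}$, $\sum_jp^\star_{ij}=1$; $\Gamma^\star_i=\max_jp^\star_{ij}/\min_kp^\star_{ik}\in[1,\infty]$; $\preccurlyeq$ is coordinatewise $\le$. $H_0$: $Y_{ij}(1)=Y_{ij}(0)$ for all $i,j$. $T=\sum_iT_i$, $T_i=\sum_jZ_{ij}q_{ij}$, $q_{ij}$ fixed functions of $Y(0)$; $\mu_i=\mathbb ET_i$, $v_i^2=\mathrm{Var}T_i$ (true). Sort $q_{i(1)}\le\dots\le q_{i(n_i)}$, $R_i=q_{i(n_i)}-q_{i(1)}$. For $\Gamma_i<\infty$, $1\le a\le n_i-1$: $\mu_{ia}(\Gamma_i)=\frac{\sum_{j\le a}q_{i(j)}+\Gamma_i\sum_{j>a}q_{i(j)}}{a+\Gamma_i(n_i-a)}$, $v_{ia}^2(\Gamma_i)=\frac{\sum_{j\le a}q_{i(j)}^2+\Gamma_i\sum_{j>a}q_{i(j)}^2}{a+\Gamma_i(n_i-a)}-\mu_{ia}(\Gamma_i)^2$;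 $\mu_i(\Gamma_i)=\max_a\mu_{ia}(\Gamma_i)$, $v_i^2(\Gamma_i)=\max\{v_{ia}^2(\Gamma_i):\mu_{ia}(\Gamma_i)=\mu_i(\Gamma_i)\}$; $\mu_i(\infty)=q_{i(n_i)}$, $v_i^2(\infty)=0$; $\mu(\Gamma)=\sum_i\mu_i(\Gamma_i)$, $\sigma^2(\Gamma)=\sum_iv_i^2(\Gamma_i)$. Condition A1: $(\max_iR_i^2)/\sum_iR_i^2/(n_i\Gamma^\star_i)^3\to0$. Condition A2($\Gamma$): with $\mathcal A_\Gamma=\{i:v_i^2>v_i^2(\Gamma_i)\}$, $\Delta_\mu(\Gamma)=|\mathcal A_\Gamma|^{-1}\sum_{i\in\mathcal A_\Gamma}\{\mu_i(\Gamma_i)-\mu_i\}$, $\Delta_{v^2}(\Gamma)=|\mathcal A_\Gamma|^{-1}\sum_{i\in\mathcal A_\Gamma}\{v_i^2-v_i^2(\Gamma_i)\}$ (ratio $=\infty$ if $\mathcal A_\Gamma=\emptyset$), $\frac{\Delta_\mu(\Gamma)}{\Delta_{v^2}(\Gamma)}\sqrt{\sum_iR_i^2/(n_i\Gamma^\star_i)^3}\to\infty$. *)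

theory Defs
  imports "HOL-Probability.Probability"
begin

definition Phi :: "real \<Rightarrow> real" where
  "Phi x = cdf std_normal_distribution x"

(* Order statistics of the scores q_0,...,q_{n-1} of one matched set;
   qs q n j (0-indexed) is q_{i(j+1)} of the paper *)
definition qs :: "(nat \<Rightarrow> real) \<Rightarrow> nat \<Rightarrow> nat \<Rightarrow> real" where
  "qs q n j = sort (map q [0..<n]) ! j"

definition rangeR :: "(nat \<Rightarrow> real) \<Rightarrow> nat \<Rightarrow> real" where
  "rangeR q n = qs q n (n - 1) - qs q n 0"

definition mu_a :: "(nat \<Rightarrow> real) \<Rightarrow> nat \<Rightarrow> real \<Rightarrow> nat \<Rightarrow> real" where
  "mu_a q n G a =
     ((\<Sum>j<a. qs q n j) + G * (\<Sum>j\<in>{a..<n}. qs q n j)) / (real a + G * real (n - a))"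

definition v2_a :: "(nat \<Rightarrow> real) \<Rightarrow> nat \<Rightarrow> real \<Rightarrow> nat \<Rightarrow> real" where
  "v2_a q n G a =
     ((\<Sum>j<a. (qs q n j)\<^sup>2) + G * (\<Sum>j\<in>{a..<n}. (qs q n j)\<^sup>2)) / (real a + G * real (n - a))
     - (mu_a q n G a)\<^sup>2"

definition mu_G :: "(nat \<Rightarrow> real) \<Rightarrow> nat \<Rightarrow> ereal \<Rightarrow> real" where
  "mu_G q n G = (if G = \<infinity> then qs q n (n - 1)
                 else Max ((mu_a q n (real_of_ereal G)) ` {1..n-1}))"

definition v2_G :: "(nat \<Rightarrow> real) \<Rightarrow> nat \<Rightarrow> ereal \<Rightarrow> real" where
  "v2_G q n G = (if G = \<infinity> then 0
                 else Max ((v2_a q n (real_of_ereal G)) `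
                      {a \<in> {1..n-1}. mu_a q n (real_of_ereal G) a = mu_G q n G}))"

definition Gstar :: "(nat \<Rightarrow> real) \<Rightarrow> nat \<Rightarrow> ereal" where
  "Gstar p n = (if Min (p ` {..<n}) > 0
                then ereal (Max (p ` {..<n}) / Min (p ` {..<n})) else \<infinity>)"

definition wA1 :: "(nat \<Rightarrow> real) \<Rightarrow> (nat \<Rightarrow> real) \<Rightarrow> nat \<Rightarrow> real" where
  "wA1 p q n = (case Gstar p n of ereal g \<Rightarrow> (rangeR q n)\<^sup>2 / (real n * g) ^ 3 | _ \<Rightarrow> 0)"

(* true mean and variance of T_i = sum_j Z_ij q_ij *)
definition mu_true :: "(nat \<Rightarrow> real) \<Rightarrow> (nat \<Rightarrow> real) \<Rightarrow> nat \<Rightarrow> real" where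
  "mu_true p q n = (\<Sum>j<n. p j * q j)"

definition v2_true :: "(nat \<Rightarrow> real) \<Rightarrow> (nat \<Rightarrow> real) \<Rightarrow> nat \<Rightarrow> real" where
  "v2_true p q n = (\<Sum>j<n. p j * (q j)\<^sup>2) - (mu_true p q n)\<^sup>2"

end

theory Submission
  imports Defs
begin


lemma finite_distr_exists:
  fixes \<Omega> :: "'a set" and w :: "'a \<Rightarrow> real" and Y :: "'a \<Rightarrow> real"
  assumes fin: "finite \<Omega>" and nn: "\<And>\<omega>. \<omega> \<in> \<Omega> \<Longrightarrow> 0 \<le> w \<omega>" and s1: "sum w \<Omega> = 1"
  shows "\<exists>M. real_distribution M \<and>
     (\<forall>x. cdf M x = (\<Sum>\<omega>\<in>\<Omega>. w \<omega> * (if Y \<omega> \<le> x then 1 else 0))) \<and>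
     (\<forall>t. char M t = (\<Sum>\<omega>\<in>\<Omega>. complex_of_real (w \<omega>) * iexp (t * Y \<omega>)))"
proof -
  define f where "f \<omega> = (if \<omega> \<in> \<Omega> then w \<omega> else 0)" for \<omega>
  have fnn: "\<And>x. 0 \<le> f x" using nn by (simp add: f_def)
  have fint: "(\<integral>\<^sup>+x. f x \<partial>count_space UNIV) = 1"
  proof -
    have "(\<integral>\<^sup>+x. ennreal (f x) \<partial>count_space UNIV) = (\<Sum>x\<in>\<Omega>. ennreal (f x))"
      by (rule nn_integral_count_space'[OF fin]) (auto simp: f_def)
    also have "\<dots> = ennreal (\<Sum>x\<in>\<Omega>. f x)" using fnn by (simp add: sum_ennreal)
    also have "(\<Sum>x\<in>\<Omega>. f x) = 1" using s1 by (simp add: f_def)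
    finally show ?thesis by simp
  qed
  define P where "P = embed_pmf f"
  have pmfP: "pmf P x = f x" for x unfolding P_def using pmf_embed_pmf[OF fnn fint] .
  have setP: "set_pmf P \<subseteq> \<Omega>"
  proof
    fix x assume "x \<in> set_pmf P"
    then have "pmf P x \<noteq> 0" by (simp add: set_pmf_eq)
    then show "x \<in> \<Omega>" by (simp add: pmfP f_def split: if_splits)
  qed
  define M where "M = distr (measure_pmf P) borel Y"
  have rd: "real_distribution M" unfolding M_def by (rule prob_space.real_distribution_distr) (auto simp: prob_space_measure_pmf)
  have cdfM: "cdf M x = (\<Sum>\<omega>\<in>\<Omega>. w \<omega> * (if Y \<omega> \<le> x then 1 else 0))" for x
  proof -
    have "cdf M x = measure (measure_pmf P) (Y -` {..x})"
      unfolding cdf_def M_def by (subst measure_distr) auto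
    also have "\<dots> = (\<integral>\<omega>. indicator (Y -` {..x}) \<omega> \<partial>measure_pmf P)" by simp
    also have "\<dots> = (\<Sum>\<omega>\<in>\<Omega>. indicator (Y -` {..x}) \<omega> * pmf P \<omega>)"
      by (rule integral_measure_pmf_real[OF fin]) (use setP in auto)
    also have "\<dots> = (\<Sum>\<omega>\<in>\<Omega>. w \<omega> * (if Y \<omega> \<le> x then 1 else 0))"
      by (intro sum.cong) (auto simp: pmfP f_def indicator_def)
    finally show ?thesis .
  qed
  have charM: "char M t = (\<Sum>\<omega>\<in>\<Omega>. complex_of_real (w \<omega>) * iexp (t * Y \<omega>))" for t
  proof -
    have "char M t = (CLINT \<omega>|measure_pmf P. iexp (t * Y \<omega>))"
      unfolding char_def M_def by (subst integral_distr) auto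
    also have "\<dots> = (\<Sum>\<omega>\<in>\<Omega>. pmf P \<omega> *\<^sub>R iexp (t * Y \<omega>))"
      by (rule integral_measure_pmf[OF fin]) (use setP in auto)
    also have "\<dots> = (\<Sum>\<omega>\<in>\<Omega>. complex_of_real (w \<omega>) * iexp (t * Y \<omega>))"
      by (intro sum.cong) (auto simp: pmfP f_def scaleR_conv_of_real)
    finally show ?thesis .
  qed
  show ?thesis using rd cdfM charM by blast
qed



lemma exp_neg_upper:
  fixes x :: real assumes "0 \<le> x" shows "exp (-x) \<le> 1 - x + x^2/2"
proof -
  define g where "g y = 1 - y + y^2/2 - exp (-y)" for y :: real
  have "g 0 \<le> g x"
  proof (rule DERIV_nonneg_imp_nondecreasing[OF assms])
    fix y :: real assume y: "0 \<le> y" "y \<le> x"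
    have "DERIV g y :> (-1 + y + exp (-y))"
      unfolding g_def by (auto intro!: derivative_eq_intros simp: power2_eq_square)
    moreover have "0 \<le> -1 + y + exp (-y)" using exp_ge_add_one_self[of "-y"] by simp
    ultimately show "\<exists>d. DERIV g y :> d \<and> 0 \<le> d" by blast
  qed
  then show ?thesis by (simp add: g_def)
qed

lemma exp_neg_bound:
  fixes x :: real assumes "0 \<le> x" shows "\<bar>exp (-x) - (1 - x)\<bar> \<le> x^2/2"
  using exp_neg_upper[OF assms] exp_ge_add_one_self[of "-x"] by (simp add: abs_le_iff)

lemma taylor2_complex: "(\<Sum>k\<le>2. (\<i> * complex_of_real x)^k / fact k) = 1 + \<i> * x - (complex_of_real x)^2/2"
  by (simp add: numeral_2_eq_2 power2_eq_square field_simps)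

lemma char_factor_bound:
  fixes p d :: "nat \<Rightarrow> real" and m :: nat and u R :: real
  assumes pnn: "\<And>j. j < m \<Longrightarrow> 0 \<le> p j" and ps: "(\<Sum>j<m. p j) = 1"
    and pd: "(\<Sum>j<m. p j * d j) = 0" and db: "\<And>j. j < m \<Longrightarrow> \<bar>d j\<bar> \<le> R"
  shows "cmod ((\<Sum>j<m. complex_of_real (p j) * iexp (u * d j))
            - complex_of_real (1 - u^2 * (\<Sum>j<m. p j * (d j)^2) / 2))
         \<le> \<bar>u\<bar>^3 * R * (\<Sum>j<m. p j * (d j)^2) / 6"
proof -
  define v where "v = (\<Sum>j<m. p j * (d j)^2)"
  have c1: "(\<Sum>j<m. complex_of_real (p j)) = 1" using ps by (metis of_real_1 of_real_sum)
  have c2: "(\<Sum>j<m. complex_of_real (p j) * complex_of_real (d j)) = 0"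
    using pd by (metis (no_types, lifting) of_real_0 of_real_mult of_real_sum sum.cong)
  have c3: "(\<Sum>j<m. complex_of_real (p j) * (complex_of_real (d j))^2) = complex_of_real v"
    unfolding v_def by (simp add: of_real_sum)
  have "(\<Sum>j<m. complex_of_real (p j) * iexp (u * d j)) - complex_of_real (1 - u^2 * v / 2)
      = (\<Sum>j<m. complex_of_real (p j) * (iexp (u * d j) - (\<Sum>k\<le>2. (\<i> * complex_of_real (u * d j))^k / fact k)))"
  proof -
    have "(\<Sum>j<m. complex_of_real (p j) * (iexp (u * d j) - (\<Sum>k\<le>2. (\<i> * complex_of_real (u * d j))^k / fact k)))
        = (\<Sum>j<m. complex_of_real (p j) * iexp (u * d j)) - (\<Sum>j<m. complex_of_real (p j))
          - \<i> * u * (\<Sum>j<m. complex_of_real (p j) * complex_of_real (d j))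
          + u^2/2 * (\<Sum>j<m. complex_of_real (p j) * (complex_of_real (d j))^2)"
      unfolding taylor2_complex by (simp add: algebra_simps sum.distrib sum_subtractf sum_distrib_left power2_eq_square)
    also have "\<dots> = (\<Sum>j<m. complex_of_real (p j) * iexp (u * d j)) - complex_of_real (1 - u^2 * v / 2)"
      by (simp add: c1 c2 c3)
    finally show ?thesis by simp
  qed
  also have "cmod \<dots> \<le> (\<Sum>j<m. cmod (complex_of_real (p j) * (iexp (u * d j) - (\<Sum>k\<le>2. (\<i> * complex_of_real (u * d j))^k / fact k))))"
    by (rule norm_sum)
  also have "\<dots> \<le> (\<Sum>j<m. p j * (\<bar>u\<bar>^3 * R * (d j)^2 / 6))"
  proof (rule sum_mono)
    fix j assume j: "j \<in> {..<m}"
    have "cmod (iexp (u * d j) - (\<Sum>k\<le>2. (\<i> * complex_of_real (u * d j))^k / fact k)) \<le> \<bar>u * d j\<bar>^3 / 6"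
      using iexp_approx1[of "u * d j" 2] by (simp add: numeral_3_eq_3)
    also have "\<bar>u * d j\<bar>^3 = \<bar>u\<bar>^3 * (\<bar>d j\<bar> * (d j)^2)"
      by (simp add: abs_mult power_mult_distrib power2_eq_square numeral_3_eq_3 abs_mult_self_eq flip: abs_mult)
    also have "\<dots> \<le> \<bar>u\<bar>^3 * (R * (d j)^2)"
      using db[of j] j by (intro mult_left_mono mult_right_mono) auto
    finally have "cmod (iexp (u * d j) - (\<Sum>k\<le>2. (\<i> * complex_of_real (u * d j))^k / fact k)) \<le> \<bar>u\<bar>^3 * R * (d j)^2 / 6"
      by (simp add: divide_right_mono mult.assoc)
    then have "p j * cmod (iexp (u * d j) - (\<Sum>k\<le>2. (\<i> * complex_of_real (u * d j))^k / fact k)) \<le> p j * (\<bar>u\<bar>^3 * R * (d j)^2 / 6)"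
      using pnn[of j] j by (intro mult_left_mono) auto
    then show "cmod (complex_of_real (p j) * (iexp (u * d j) - (\<Sum>k\<le>2. (\<i> * complex_of_real (u * d j))^k / fact k)))
        \<le> p j * (\<bar>u\<bar>^3 * R * (d j)^2 / 6)"
      using pnn[of j] j by (simp only: norm_mult norm_of_real) (simp add: abs_of_nonneg)
  qed
  also have "\<dots> = \<bar>u\<bar>^3 * R * v / 6"
    unfolding v_def by (simp add: sum_distrib_left sum_divide_distrib algebra_simps)
  finally show ?thesis unfolding v_def .
qed

lemma half_le: "(a::real) \<le> 4 \<Longrightarrow> a / 2 \<le> 2" by simp

lemma clt_step:
  fixes I :: nat and n :: "nat \<Rightarrow> nat" and p d :: "nat \<Rightarrow> nat \<Rightarrow> real"
    and R :: "nat \<Rightarrow> real" and Rm s t :: real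
  assumes pnn: "\<And>i j. i < I \<Longrightarrow> j < n i \<Longrightarrow> 0 \<le> p i j"
    and ps: "\<And>i. i < I \<Longrightarrow> (\<Sum>j<n i. p i j) = 1"
    and pd: "\<And>i. i < I \<Longrightarrow> (\<Sum>j<n i. p i j * d i j) = 0"
    and db: "\<And>i j. i < I \<Longrightarrow> j < n i \<Longrightarrow> \<bar>d i j\<bar> \<le> R i"
    and Rm: "\<And>i. i < I \<Longrightarrow> (R i)^2 \<le> Rm"
    and Rnn: "\<And>i. i < I \<Longrightarrow> 0 \<le> R i"
    and sdef: "s^2 = (\<Sum>i<I. \<Sum>j<n i. p i j * (d i j)^2)"
    and spos: "0 < s"
    and small: "t^2 * Rm / s^2 \<le> 4"
  shows "cmod ((\<Sum>z\<in>PiE {..<I} (\<lambda>i. {..<n i}).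
              complex_of_real (\<Prod>i<I. p i (z i)) * iexp (t * ((\<Sum>i<I. d i (z i)) / s)))
            - complex_of_real (exp (-(t^2)/2)))
         \<le> \<bar>t\<bar>^3 / 6 * sqrt (Rm / s^2) + t^4 / 8 * (Rm / s^2)"
proof -
  define u where "u = t / s"
  define v where "v i = (\<Sum>j<n i. p i j * (d i j)^2)" for i
  define \<phi> where "\<phi> i = (\<Sum>j<n i. complex_of_real (p i j) * iexp (u * d i j))" for i
  define x where "x i = u^2 * v i / 2" for i
  define b where "b i = complex_of_real (1 - x i)" for i
  define e where "e i = complex_of_real (exp (- x i))" for i
  have vnn: "0 \<le> v i" if "i < I" for i
    unfolding v_def using pnn that by (intro sum_nonneg mult_nonneg_nonneg) auto
  have vle: "v i \<le> Rm" if i: "i < I" for i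
  proof -
    have "v i \<le> (\<Sum>j<n i. p i j * (R i)^2)"
      unfolding v_def
    proof (rule sum_mono)
      fix j assume j: "j \<in> {..<n i}"
      have "(d i j)^2 \<le> (R i)^2"
        using db[OF i, of j] j Rnn[OF i] by (simp add: abs_le_square_iff[symmetric] abs_le_iff)
      then show "p i j * (d i j)^2 \<le> p i j * (R i)^2" using pnn[OF i, of j] j by (intro mult_left_mono) auto
    qed
    also have "\<dots> = (R i)^2" using ps[OF i] by (simp add: sum_distrib_right[symmetric])
    finally show ?thesis using Rm[OF i] by simp
  qed
  have xnn: "0 \<le> x i" if "i < I" for i unfolding x_def using vnn[OF that] by simp
  have xle: "x i \<le> u^2 * Rm / 2" if "i < I" for i
    unfolding x_def using vle[OF that] by (intro divide_right_mono mult_left_mono) auto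
  have uRm: "u^2 * Rm / 2 = t^2 * Rm / s^2 / 2" unfolding u_def by (simp add: power_divide)
  have xle2: "x i \<le> 2" if "i < I" for i
  proof -
    have "x i \<le> t^2 * Rm / s^2 / 2" using xle[OF that] uRm by simp
    moreover have "t^2 * Rm / s^2 / 2 \<le> 2"
      by (rule half_le[OF small])
    ultimately show ?thesis by (rule order.trans)
  qed
  have sumv: "(\<Sum>i<I. v i) = s^2" unfolding v_def sdef ..
  have sumx: "(\<Sum>i<I. x i) = t^2 / 2"
  proof -
    have "(\<Sum>i<I. x i) = u^2 / 2 * (\<Sum>i<I. v i)" unfolding x_def by (simp add: sum_distrib_left)
    also have "\<dots> = t^2/2" using spos unfolding sumv u_def by (simp add: power_divide)
    finally show ?thesis .
  qed
  have fact: "(\<Sum>z\<in>PiE {..<I} (\<lambda>i. {..<n i}).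
              complex_of_real (\<Prod>i<I. p i (z i)) * iexp (t * ((\<Sum>i<I. d i (z i)) / s)))
            = (\<Prod>i<I. \<phi> i)"
  proof -
    have "(\<Prod>i<I. \<phi> i) = (\<Sum>z\<in>PiE {..<I} (\<lambda>i. {..<n i}). \<Prod>i<I. complex_of_real (p i (z i)) * iexp (u * d i (z i)))"
      unfolding \<phi>_def by (rule prod_sum_PiE) auto
    also have "\<dots> = (\<Sum>z\<in>PiE {..<I} (\<lambda>i. {..<n i}).
              complex_of_real (\<Prod>i<I. p i (z i)) * iexp (t * ((\<Sum>i<I. d i (z i)) / s)))"
    proof (rule sum.cong[OF refl])
      fix z
      have "t * ((\<Sum>i<I. d i (z i)) / s) = (\<Sum>i<I. u * d i (z i))"
        unfolding u_def by (simp add: sum_distrib_left sum_divide_distrib)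
      then have "iexp (t * ((\<Sum>i<I. d i (z i)) / s)) = (\<Prod>i<I. iexp (u * d i (z i)))"
        by (simp add: of_real_sum sum_distrib_left exp_sum)
      then show "(\<Prod>i<I. complex_of_real (p i (z i)) * iexp (u * d i (z i))) =
          complex_of_real (\<Prod>i<I. p i (z i)) * iexp (t * ((\<Sum>i<I. d i (z i)) / s))"
        by (simp add: prod.distrib of_real_prod)
    qed
    finally show ?thesis by simp
  qed
  have eprod: "(\<Prod>i<I. e i) = complex_of_real (exp (-(t^2)/2))"
  proof -
    have "(\<Prod>i<I. e i) = complex_of_real (\<Prod>i<I. exp (- x i))" unfolding e_def by (simp add: of_real_prod)
    also have "(\<Prod>i<I. exp (- x i)) = exp (\<Sum>i<I. - x i)" by (simp add: exp_sum)
    also have "(\<Sum>i<I. - x i) = -(t^2)/2" by (simp add: sum_negf sumx)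
    finally show ?thesis .
  qed
  have phi1: "cmod (\<phi> i) \<le> 1" if i: "i < I" for i
  proof -
    have "cmod (\<phi> i) \<le> (\<Sum>j<n i. cmod (complex_of_real (p i j) * iexp (u * d i j)))"
      unfolding \<phi>_def by (rule norm_sum)
    also have "\<dots> = (\<Sum>j<n i. p i j)"
      using pnn[OF i] by (intro sum.cong) (auto simp: norm_mult)
    finally show ?thesis using ps[OF i] by simp
  qed
  have b1: "cmod (b i) \<le> 1" if i: "i < I" for i
    unfolding b_def using xnn[OF i] xle2[OF i] by (simp only: norm_of_real)
  have e1: "cmod (e i) \<le> 1" if i: "i < I" for i
    unfolding e_def using xnn[OF i] by simp
  have A: "cmod ((\<Prod>i<I. \<phi> i) - (\<Prod>i<I. b i)) \<le> \<bar>t\<bar>^3 / 6 * sqrt (Rm / s^2)"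
  proof -
    have "cmod ((\<Prod>i<I. \<phi> i) - (\<Prod>i<I. b i)) \<le> (\<Sum>i<I. cmod (\<phi> i - b i))"
      by (rule norm_prod_diff) (auto intro: phi1 b1)
    also have "\<dots> \<le> (\<Sum>i<I. \<bar>u\<bar>^3 * sqrt Rm * v i / 6)"
    proof (rule sum_mono)
      fix i assume i: "i \<in> {..<I}"
      have "cmod (\<phi> i - b i) \<le> \<bar>u\<bar>^3 * R i * v i / 6"
        unfolding \<phi>_def b_def x_def v_def
        by (rule char_factor_bound) (use i pnn ps pd db in auto)
      also have "R i \<le> sqrt Rm" using Rm[of i] Rnn[of i] i real_le_rsqrt by auto
      then have "\<bar>u\<bar>^3 * R i * v i / 6 \<le> \<bar>u\<bar>^3 * sqrt Rm * v i / 6"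
        using vnn[of i] i by (intro divide_right_mono mult_right_mono mult_left_mono) auto
      finally show "cmod (\<phi> i - b i) \<le> \<bar>u\<bar>^3 * sqrt Rm * v i / 6" .
    qed
    also have "\<dots> = \<bar>u\<bar>^3 * sqrt Rm * s^2 / 6"
      by (simp add: sum_distrib_left[symmetric] sum_divide_distrib[symmetric] sumv)
    also have "\<dots> = \<bar>t\<bar>^3 / 6 * sqrt (Rm / s^2)"
      using spos unfolding u_def
      by (simp add: real_sqrt_divide power_divide abs_divide field_simps power2_eq_square power3_eq_cube)
    finally show ?thesis .
  qed
  have B: "cmod ((\<Prod>i<I. b i) - (\<Prod>i<I. e i)) \<le> t^4 / 8 * (Rm / s^2)"
  proof -
    have "cmod ((\<Prod>i<I. b i) - (\<Prod>i<I. e i)) \<le> (\<Sum>i<I. cmod (b i - e i))"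
      by (rule norm_prod_diff) (auto intro: e1 b1)
    also have "\<dots> \<le> (\<Sum>i<I. (u^2 * Rm / 2) * x i / 2)"
    proof (rule sum_mono)
      fix i assume i: "i \<in> {..<I}"
      have "cmod (b i - e i) = \<bar>exp (- x i) - (1 - x i)\<bar>"
        unfolding b_def e_def by (simp flip: of_real_diff)
      also have "\<dots> \<le> (x i)^2 / 2" using exp_neg_bound xnn i by auto
      also have "(x i)^2 \<le> (u^2 * Rm / 2) * x i"
        using xle[of i] xnn[of i] i unfolding power2_eq_square by (intro mult_right_mono) auto
      finally show "cmod (b i - e i) \<le> (u^2 * Rm / 2) * x i / 2" by simp
    qed
    also have "\<dots> = (u^2 * Rm / 2) * (t^2/2) / 2"
      by (simp add: sum_distrib_left[symmetric] sum_divide_distrib[symmetric] sumx)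
    also have "\<dots> = t^4 / 8 * (Rm / s^2)"
      unfolding uRm by (simp add: field_simps power2_eq_square power4_eq_xxxx)
    finally show ?thesis .
  qed
  have "cmod ((\<Prod>i<I. \<phi> i) - (\<Prod>i<I. e i)) \<le> cmod ((\<Prod>i<I. \<phi> i) - (\<Prod>i<I. b i)) + cmod ((\<Prod>i<I. b i) - (\<Prod>i<I. e i))"
    by (rule norm_diff_triangle_ineq[THEN order.trans[rotated]]) simp
  then show ?thesis using A B unfolding fact eprod by linarith
qed



lemma clt_char_lim:
  fixes n :: "nat \<Rightarrow> nat \<Rightarrow> nat" and p d :: "nat \<Rightarrow> nat \<Rightarrow> nat \<Rightarrow> real"
    and R :: "nat \<Rightarrow> nat \<Rightarrow> real" and Rm s :: "nat \<Rightarrow> real" and t :: real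
  assumes pnn: "\<And>I i j. i < I \<Longrightarrow> j < n I i \<Longrightarrow> 0 \<le> p I i j"
    and ps: "\<And>I i. i < I \<Longrightarrow> (\<Sum>j<n I i. p I i j) = 1"
    and pd: "\<And>I i. i < I \<Longrightarrow> (\<Sum>j<n I i. p I i j * d I i j) = 0"
    and db: "\<And>I i j. i < I \<Longrightarrow> j < n I i \<Longrightarrow> \<bar>d I i j\<bar> \<le> R I i"
    and Rm: "\<And>I i. i < I \<Longrightarrow> (R I i)^2 \<le> Rm I"
    and Rnn: "\<And>I i. i < I \<Longrightarrow> 0 \<le> R I i"
    and sdef: "\<And>I. (s I)^2 = (\<Sum>i<I. \<Sum>j<n I i. p I i j * (d I i j)^2)"
    and spos: "eventually (\<lambda>I. 0 < s I) sequentially"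
    and lim: "(\<lambda>I. Rm I / (s I)^2) \<longlonglongrightarrow> 0"
  shows "(\<lambda>I. \<Sum>z\<in>PiE {..<I} (\<lambda>i. {..<n I i}).
              complex_of_real (\<Prod>i<I. p I i (z i)) * iexp (t * ((\<Sum>i<I. d I i (z i)) / s I)))
         \<longlonglongrightarrow> complex_of_real (exp (-(t^2)/2))"
proof -
  let ?F = "\<lambda>I. \<Sum>z\<in>PiE {..<I} (\<lambda>i. {..<n I i}).
              complex_of_real (\<Prod>i<I. p I i (z i)) * iexp (t * ((\<Sum>i<I. d I i (z i)) / s I))"
  let ?L = "complex_of_real (exp (-(t^2)/2))"
  let ?g = "\<lambda>I. \<bar>t\<bar>^3 / 6 * sqrt (Rm I / (s I)^2) + t^4 / 8 * (Rm I / (s I)^2)"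
  have sq: "(\<lambda>I. sqrt (Rm I / (s I)^2)) \<longlonglongrightarrow> 0" using tendsto_real_sqrt[OF lim] by simp
  have "?g \<longlonglongrightarrow> \<bar>t\<bar>^3 / 6 * 0 + t^4 / 8 * 0"
    by (intro tendsto_add tendsto_mult tendsto_const lim sq)
  then have g0: "?g \<longlonglongrightarrow> 0" by simp
  have "0 < t^2 + 1" by (metis add_nonneg_pos zero_le_power2 zero_less_one)
  then have e: "0 < 4 / (t^2 + 1)" by simp
  have ev: "eventually (\<lambda>I. Rm I / (s I)^2 < 4 / (t^2 + 1)) sequentially"
    using order_tendstoD(2)[OF lim e] .
  have "eventually (\<lambda>I. norm (?F I - ?L) \<le> ?g I) sequentially"
    using ev spos
  proof eventually_elim
    case (elim I)
    have "t^2 * Rm I / (s I)^2 \<le> 4"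
    proof -
      have "t^2 * (Rm I / (s I)^2) \<le> t^2 * (4 / (t^2 + 1))"
        using elim(1) by (intro mult_left_mono) auto
      also have "\<dots> \<le> 4" by (simp add: field_simps add_pos_nonneg)
      finally show ?thesis by simp
    qed
    then show ?case
      by (intro clt_step[where R="R I"]) (use elim pnn ps pd db Rm Rnn sdef in auto)
  qed
  then have "(\<lambda>I. ?F I - ?L) \<longlonglongrightarrow> 0"
    by (rule Lim_null_comparison) (rule g0)
  then show ?thesis by (rule LIM_zero_cancel)
qed

lemma isCont_Phi: "isCont (cdf std_normal_distribution) x"
proof -
  interpret real_distribution std_normal_distribution by (rule real_dist_normal_dist)
  have "emeasure std_normal_distribution {x} = (\<integral>\<^sup>+y. ennreal (std_normal_density y) * indicator {x} y \<partial>lborel)"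
    by (rule emeasure_density) auto
  also have "\<dots> = 0"
  proof -
    have ae: "AE y in lborel. ennreal (std_normal_density y) * indicator {x} y = 0"
      using AE_lborel_singleton[of x] by eventually_elim auto
    show ?thesis by (subst nn_integral_cong_AE[OF ae]) simp
  qed
  finally have "measure std_normal_distribution {x} = 0" by (simp add: measure_def)
  then show ?thesis by (simp add: isCont_cdf)
qed

lemma clt_cdf_lim:
  fixes n :: "nat \<Rightarrow> nat \<Rightarrow> nat" and p d :: "nat \<Rightarrow> nat \<Rightarrow> nat \<Rightarrow> real"
    and R :: "nat \<Rightarrow> nat \<Rightarrow> real" and Rm s :: "nat \<Rightarrow> real" and x :: real
  assumes pnn: "\<And>I i j. i < I \<Longrightarrow> j < n I i \<Longrightarrow> 0 \<le> p I i j"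
    and ps: "\<And>I i. i < I \<Longrightarrow> (\<Sum>j<n I i. p I i j) = 1"
    and pd: "\<And>I i. i < I \<Longrightarrow> (\<Sum>j<n I i. p I i j * d I i j) = 0"
    and db: "\<And>I i j. i < I \<Longrightarrow> j < n I i \<Longrightarrow> \<bar>d I i j\<bar> \<le> R I i"
    and Rm: "\<And>I i. i < I \<Longrightarrow> (R I i)^2 \<le> Rm I"
    and Rnn: "\<And>I i. i < I \<Longrightarrow> 0 \<le> R I i"
    and sdef: "\<And>I. (s I)^2 = (\<Sum>i<I. \<Sum>j<n I i. p I i j * (d I i j)^2)"
    and spos: "eventually (\<lambda>I. 0 < s I) sequentially"
    and lim: "(\<lambda>I. Rm I / (s I)^2) \<longlonglongrightarrow> 0"
  shows "(\<lambda>I. \<Sum>z\<in>PiE {..<I} (\<lambda>i. {..<n I i}).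
              (\<Prod>i<I. p I i (z i)) * (if (\<Sum>i<I. d I i (z i)) / s I \<le> x then 1 else 0))
         \<longlonglongrightarrow> Phi x"
proof -
  have ex: "\<exists>M. real_distribution M \<and>
     (\<forall>x. cdf M x = (\<Sum>z\<in>PiE {..<I} (\<lambda>i. {..<n I i}). (\<Prod>i<I. p I i (z i)) * (if (\<Sum>i<I. d I i (z i)) / s I \<le> x then 1 else 0))) \<and>
     (\<forall>t. char M t = (\<Sum>z\<in>PiE {..<I} (\<lambda>i. {..<n I i}). complex_of_real (\<Prod>i<I. p I i (z i)) * iexp (t * ((\<Sum>i<I. d I i (z i)) / s I))))" for I
  proof (rule finite_distr_exists)
    show "finite (PiE {..<I} (\<lambda>i. {..<n I i}))" by (rule finite_PiE) auto
    show "0 \<le> (\<Prod>i<I. p I i (z i))" if "z \<in> PiE {..<I} (\<lambda>i. {..<n I i})" for z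
      using that pnn by (intro prod_nonneg) (auto simp: PiE_iff)
    have "(\<Sum>z\<in>PiE {..<I} (\<lambda>i. {..<n I i}). \<Prod>i<I. p I i (z i)) = (\<Prod>i<I. \<Sum>j<n I i. p I i j)"
      by (rule prod_sum_PiE[symmetric]) auto
    also have "\<dots> = 1" using ps by simp
    finally show "(\<Sum>z\<in>PiE {..<I} (\<lambda>i. {..<n I i}). \<Prod>i<I. p I i (z i)) = 1" .
  qed
  then obtain M where M: "\<And>I. real_distribution (M I) \<and>
     (\<forall>x. cdf (M I) x = (\<Sum>z\<in>PiE {..<I} (\<lambda>i. {..<n I i}). (\<Prod>i<I. p I i (z i)) * (if (\<Sum>i<I. d I i (z i)) / s I \<le> x then 1 else 0))) \<and>
     (\<forall>t. char (M I) t = (\<Sum>z\<in>PiE {..<I} (\<lambda>i. {..<n I i}). complex_of_real (\<Prod>i<I. p I i (z i)) * iexp (t * ((\<Sum>i<I. d I i (z i)) / s I))))"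
    by metis
  have wc: "weak_conv_m M std_normal_distribution"
  proof (rule levy_continuity)
    show "real_distribution (M I)" for I using M by blast
    show "real_distribution std_normal_distribution" by (rule real_dist_normal_dist)
    fix t
    show "(\<lambda>I. char (M I) t) \<longlonglongrightarrow> char std_normal_distribution t"
    proof -
      have eq: "char (M I) t = (\<Sum>z\<in>PiE {..<I} (\<lambda>i. {..<n I i}). complex_of_real (\<Prod>i<I. p I i (z i)) * iexp (t * ((\<Sum>i<I. d I i (z i)) / s I)))" for I
        using M by blast
      show ?thesis unfolding char_std_normal_distribution eq
        by (rule clt_char_lim[OF pnn ps pd db Rm Rnn sdef spos lim])
    qed
  qed
  then have "(\<lambda>I. cdf (M I) x) \<longlonglongrightarrow> cdf std_normal_distribution x"
    unfolding weak_conv_m_def weak_conv_def using isCont_Phi by blast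
  then show ?thesis using M unfolding Phi_def by simp
qed



lemma qs_len: "length (sort (map q [0..<n])) = n" by simp

lemma qs_sorted: "i \<le> j \<Longrightarrow> j < n \<Longrightarrow> qs q n i \<le> qs q n j"
  unfolding qs_def by (rule sorted_nth_mono) auto

lemma qs_mem: "k < n \<Longrightarrow> \<exists>j<n. qs q n k = q j"
proof -
  assume k: "k < n"
  have "qs q n k \<in> set (sort (map q [0..<n]))" unfolding qs_def by (rule nth_mem) (simp add: k)
  then show ?thesis by auto
qed

lemma q_in_qs: "j < n \<Longrightarrow> \<exists>k<n. qs q n k = q j"
proof -
  assume j: "j < n"
  have "q j \<in> set (sort (map q [0..<n]))" using j by simp
  then obtain k where "k < length (sort (map q [0..<n]))" "sort (map q [0..<n]) ! k = q j"
    by (metis in_set_conv_nth)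
  then show ?thesis unfolding qs_def by auto
qed

lemma q_bounds: "j < n \<Longrightarrow> qs q n 0 \<le> q j \<and> q j \<le> qs q n (n - 1)"
proof -
  assume j: "j < n"
  obtain k where k: "k < n" "qs q n k = q j" using q_in_qs[OF j] by blast
  show ?thesis using qs_sorted[of 0 k n q] qs_sorted[of k "n-1" n q] k by auto
qed

lemma sum_qs: "(\<Sum>j<n. f (q j)) = (\<Sum>k<n. f (qs q n k))"
proof -
  let ?L = "sort (map q [0..<n])"
  have "(\<Sum>j<n. f (q j)) = sum_list (map (\<lambda>j. f (q j)) [0..<n])"
    by (simp add: sum_set_upt_conv_sum_list_nat[symmetric] atLeast0LessThan)
  also have "\<dots> = sum_mset (image_mset f (mset (map q [0..<n])))"
    by (simp add: sum_mset_sum_list[symmetric] comp_def multiset.map_comp)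
  also have "\<dots> = sum_mset (image_mset f (mset ?L))" by simp
  also have "\<dots> = sum_list (map f ?L)"
    by (simp add: sum_mset_sum_list[symmetric] mset_map)
  also have "\<dots> = (\<Sum>k=0..<length ?L. map f ?L ! k)" using sum_list_sum_nth[of "map f ?L"] by simp
  also have "\<dots> = (\<Sum>k<n. f (qs q n k))"
    by (simp add: qs_def atLeast0LessThan)
  finally show ?thesis .
qed

lemma Gstar_cases:
  assumes "Min (p ` {..<n}) > 0" shows "Gstar p n = ereal (Max (p ` {..<n}) / Min (p ` {..<n}))"
  using assms by (simp add: Gstar_def)

lemma Gstar_inf: "\<not> Min (p ` {..<n}) > 0 \<Longrightarrow> Gstar p n = \<infinity>"
  by (simp add: Gstar_def)

lemma sum_split_at:
  fixes f :: "nat \<Rightarrow> real"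
  assumes "a \<le> n" shows "(\<Sum>k<n. f k) = (\<Sum>k<a. f k) + (\<Sum>k\<in>{a..<n}. f k)"
  using sum.atLeastLessThan_concat[of 0 a n f] assms by (simp add: atLeast0LessThan)

lemma sorted_split:
  fixes q :: "nat \<Rightarrow> real" and c :: real
  obtains a where "a \<le> n" "\<And>k. k < a \<Longrightarrow> qs q n k \<le> c" "\<And>k. a \<le> k \<Longrightarrow> k < n \<Longrightarrow> c < qs q n k"
proof -
  let ?L = "sort (map q [0..<n])"
  define a where "a = length (takeWhile (\<lambda>y. y \<le> c) ?L)"
  have an: "a \<le> n" unfolding a_def using length_takeWhile_le[of "\<lambda>y. y \<le> c" ?L] by simp
  have lo: "qs q n k \<le> c" if "k < a" for k
  proof -
    have "takeWhile (\<lambda>y. y \<le> c) ?L ! k = ?L ! k" using that a_def takeWhile_nth by blast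
    moreover have "takeWhile (\<lambda>y. y \<le> c) ?L ! k \<in> set (takeWhile (\<lambda>y. y \<le> c) ?L)"
      using that a_def by simp
    ultimately show ?thesis unfolding qs_def by (metis set_takeWhileD)
  qed
  have hi: "c < qs q n k" if "a \<le> k" "k < n" for k
  proof -
    have "a < length ?L" using that by simp
    then have "\<not> ?L ! a \<le> c" unfolding a_def by (rule nth_length_takeWhile)
    moreover have "qs q n a \<le> qs q n k" using that by (intro qs_sorted) auto
    ultimately show ?thesis unfolding qs_def by simp
  qed
  show ?thesis using that an lo hi by blast
qed

lemma mu_true_le_mu_G:
  fixes p q :: "nat \<Rightarrow> real" and n :: nat and G :: ereal
  assumes n2: "2 \<le> n" and pnn: "\<And>j. j < n \<Longrightarrow> 0 \<le> p j" and ps: "(\<Sum>j<n. p j) = 1"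
    and Gs: "Gstar p n \<le> G"
  shows "mu_true p q n \<le> mu_G q n G"
proof (cases "G = \<infinity>")
  case True
  have "mu_true p q n = (\<Sum>j<n. p j * q j)" by (simp add: mu_true_def)
  also have "\<dots> \<le> (\<Sum>j<n. p j * qs q n (n - 1))"
    using q_bounds pnn by (intro sum_mono mult_left_mono) auto
  also have "\<dots> = qs q n (n - 1)" using ps by (simp add: sum_distrib_right[symmetric])
  finally show ?thesis using True by (simp add: mu_G_def)
next
  case False
  let ?pm = "Min (p ` {..<n})" and ?pM = "Max (p ` {..<n})"
  have "0 \<in> {..<n}" using n2 by simp
  then have ne: "p ` {..<n} \<noteq> {}" by blast
  have pm: "?pm \<le> p j" "p j \<le> ?pM" if "j < n" for j using that by auto
  have pmpos: "?pm > 0"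
  proof (rule ccontr)
    assume "\<not> ?pm > 0"
    then have "Gstar p n = \<infinity>" by (rule Gstar_inf)
    then show False using Gs False by simp
  qed
  obtain g where G: "G = ereal g" using False Gs Gstar_cases[OF pmpos]
    by (cases G) auto
  have pMg: "?pM / ?pm \<le> g" using Gs G Gstar_cases[OF pmpos] by simp
  have pMg2: "?pM \<le> g * ?pm" using pMg pmpos by (simp add: divide_le_eq)
  have pmpM: "?pm \<le> ?pM" 
  proof -
    have n0: "0 < n" using n2 by simp
    show ?thesis using pm[OF n0] by linarith
  qed
  have g1: "1 \<le> g"
  proof -
    have "1 \<le> ?pM / ?pm" using pmpM pmpos by (simp add: le_divide_eq)
    then show ?thesis using pMg by linarith
  qed
  define c where "c = mu_G q n G"
  have c_def': "c = Max (mu_a q n g ` {1..n-1})" unfolding c_def mu_G_def using G by simp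
  have muac: "mu_a q n g a \<le> c" if "a \<in> {1..n-1}" for a
    unfolding c_def' using that by (intro Max_ge) auto
  define h where "h y = (if y > c then g else 1) * (y - c)" for y
  have step1: "mu_true p q n - c \<le> ?pm * (\<Sum>j<n. h (q j))"
  proof -
    have "mu_true p q n - c = (\<Sum>j<n. p j * (q j - c))"
      using ps by (simp add: mu_true_def algebra_simps sum_subtractf sum_distrib_left[symmetric])
    also have "\<dots> \<le> (\<Sum>j<n. ?pm * h (q j))"
    proof (rule sum_mono)
      fix j assume j: "j \<in> {..<n}"
      show "p j * (q j - c) \<le> ?pm * h (q j)"
      proof (cases "q j > c")
        case True
        have "p j * (q j - c) \<le> ?pM * (q j - c)" using True pm j by (intro mult_right_mono) auto
        also have "\<dots> \<le> g * ?pm * (q j - c)" using True pMg2 by (intro mult_right_mono) auto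
        also have "\<dots> = ?pm * (g * (q j - c))" by (simp only: ac_simps)
        also have "g * (q j - c) = h (q j)" using True by (simp add: h_def)
        finally show ?thesis .
      next
        case False
        have X: "p j * (q j - c) \<le> ?pm * (q j - c)"
          using False pm j by (intro mult_right_mono_neg) auto
        have "h (q j) = q j - c" using False by (simp add: h_def)
        then show ?thesis using X by simp
      qed
    qed
    also have "\<dots> = ?pm * (\<Sum>j<n. h (q j))" by (simp add: sum_distrib_left)
    finally show ?thesis .
  qed
  have step2: "(\<Sum>k<n. h (qs q n k)) \<le> 0"
  proof -
    obtain a where an: "a \<le> n" and lo: "\<And>k. k < a \<Longrightarrow> qs q n k \<le> c"
      and hi: "\<And>k. a \<le> k \<Longrightarrow> k < n \<Longrightarrow> c < qs q n k"
      using sorted_split[of n q c] by blast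
    have split: "(\<Sum>k<n. h (qs q n k)) = (\<Sum>k<a. qs q n k - c) + g * (\<Sum>k\<in>{a..<n}. qs q n k - c)"
    proof -
      have "(\<Sum>k<n. h (qs q n k)) = (\<Sum>k<a. h (qs q n k)) + (\<Sum>k\<in>{a..<n}. h (qs q n k))"
        using an by (rule sum_split_at)
      also have "(\<Sum>k<a. h (qs q n k)) = (\<Sum>k<a. qs q n k - c)"
        using lo by (intro sum.cong) (auto simp: h_def not_less[symmetric])
      also have "(\<Sum>k\<in>{a..<n}. h (qs q n k)) = g * (\<Sum>k\<in>{a..<n}. qs q n k - c)"
        using hi by (auto simp: h_def sum_distrib_left intro!: sum.cong)
      finally show ?thesis .
    qed
    consider "a = 0" | "a = n" | "1 \<le> a" "a \<le> n - 1" using an by linarith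
    then show ?thesis
    proof cases
      case 1
      have "c < mu_a q n g 1"
      proof -
        have D: "0 < real 1 + g * real (n - 1)" using g1 by (simp add: add_pos_nonneg)
        have "(\<Sum>k\<in>{1..<n}. c) \<le> (\<Sum>k\<in>{1..<n}. qs q n k)"
          using hi 1 by (intro sum_mono) (auto intro: less_imp_le)
        then have s1: "c * real (n - 1) \<le> (\<Sum>k\<in>{1..<n}. qs q n k)" by (simp add: mult.commute)
        have "c * (real 1 + g * real (n - 1)) = c + g * (c * real (n - 1))" by (simp add: algebra_simps)
        also have "\<dots> < qs q n 0 + g * (\<Sum>k\<in>{1..<n}. qs q n k)"
          using hi[of 0] 1 n2 s1 g1 by (intro add_less_le_mono mult_left_mono) auto
        also have "\<dots> = (\<Sum>j<1. qs q n j) + g * (\<Sum>j\<in>{1..<n}. qs q n j)" by simp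
        finally show ?thesis unfolding mu_a_def using D by (simp add: pos_less_divide_eq)
      qed
      moreover have "mu_a q n g 1 \<le> c" using n2 by (intro muac) auto
      ultimately show ?thesis by simp
    next
      case 2
      have "(\<Sum>k<n. qs q n k - c) \<le> 0" using lo 2 by (intro sum_nonpos) auto
      then show ?thesis using split 2 by simp
    next
      case 3
      define D where "D = real a + g * real (n - a)"
      have Dpos: "0 < D" unfolding D_def using 3 g1 by (simp add: add_pos_nonneg)
      have "(\<Sum>k<a. qs q n k - c) + g * (\<Sum>k\<in>{a..<n}. qs q n k - c)
            = ((\<Sum>k<a. qs q n k) + g * (\<Sum>k\<in>{a..<n}. qs q n k)) - c * D"
        unfolding D_def using an by (simp add: sum_subtractf algebra_simps of_nat_diff)
      also have "\<dots> = D * (mu_a q n g a - c)"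
        unfolding mu_a_def D_def[symmetric] using Dpos by (simp add: field_simps)
      also have "\<dots> \<le> 0" using Dpos muac[of a] 3 by (intro mult_nonneg_nonpos) auto
      finally show ?thesis using split by simp
    qed
  qed
  have "(\<Sum>j<n. h (q j)) = (\<Sum>k<n. h (qs q n k))" by (rule sum_qs)
  then have "mu_true p q n - c \<le> 0"
    using step1 step2 pmpos by (metis mult_nonneg_nonpos less_imp_le order.trans)
  then show ?thesis unfolding c_def by simp
qed

lemma v2_true_eq:
  assumes ps: "(\<Sum>j<n. p j) = 1"
  shows "v2_true p q n = (\<Sum>j<n. p j * (q j - mu_true p q n)^2)"
proof -
  let ?m = "mu_true p q n"
  have "(\<Sum>j<n. p j * (q j - ?m)^2) = (\<Sum>j<n. p j * (q j)^2) - 2 * ?m * (\<Sum>j<n. p j * q j) + ?m^2 * (\<Sum>j<n. p j)"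
    by (simp add: power2_diff algebra_simps sum.distrib sum_subtractf sum_distrib_left sum_distrib_right)
  also have "\<dots> = v2_true p q n" using ps by (simp add: v2_true_def mu_true_def power2_eq_square)
  finally show ?thesis by simp
qed

lemma mu_true_bounds:
  assumes pnn: "\<And>j. j < n \<Longrightarrow> 0 \<le> p j" and ps: "(\<Sum>j<n. p j) = 1"
  shows "qs q n 0 \<le> mu_true p q n \<and> mu_true p q n \<le> qs q n (n - 1)"
proof
  have "qs q n 0 = (\<Sum>j<n. p j * qs q n 0)" using ps by (simp add: sum_distrib_right[symmetric])
  also have "\<dots> \<le> (\<Sum>j<n. p j * q j)" using q_bounds pnn by (intro sum_mono mult_left_mono) auto
  finally show "qs q n 0 \<le> mu_true p q n" by (simp add: mu_true_def)
  have "(\<Sum>j<n. p j * q j) \<le> (\<Sum>j<n. p j * qs q n (n - 1))"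
    using q_bounds pnn by (intro sum_mono mult_left_mono) auto
  also have "\<dots> = qs q n (n - 1)" using ps by (simp add: sum_distrib_right[symmetric])
  finally show "mu_true p q n \<le> qs q n (n - 1)" by (simp add: mu_true_def)
qed

lemma d_bound:
  assumes pnn: "\<And>j. j < n \<Longrightarrow> 0 \<le> p j" and ps: "(\<Sum>j<n. p j) = 1" and j: "j < n"
  shows "\<bar>q j - mu_true p q n\<bar> \<le> rangeR q n"
  using mu_true_bounds[OF pnn ps, of q] q_bounds[OF j, of q] unfolding rangeR_def by (simp add: abs_le_iff)

lemma rangeR_nn: "0 < n \<Longrightarrow> 0 \<le> rangeR q n"
  using qs_sorted[of 0 "n-1" n q] unfolding rangeR_def by simp

lemma v2_true_nn:
  assumes pnn: "\<And>j. j < n \<Longrightarrow> 0 \<le> p j" and ps: "(\<Sum>j<n. p j) = 1"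
  shows "0 \<le> v2_true p q n"
  unfolding v2_true_eq[OF ps] using pnn by (intro sum_nonneg mult_nonneg_nonneg) auto

lemma sq_aux: "((a::real) - b)^2 / 2 \<le> b^2 + a^2"
proof -
  have e: "b^2 + a^2 - (a - b)^2/2 = (a+b)^2/2" by (simp add: power2_eq_square field_simps)
  have "0 \<le> (a+b)^2/2" by simp
  then show ?thesis using e by linarith
qed

lemma v2_true_ge:
  assumes n2: "2 \<le> n" and pnn: "\<And>j. j < n \<Longrightarrow> 0 \<le> p j" and ps: "(\<Sum>j<n. p j) = 1"
  shows "wA1 p q n / 2 \<le> v2_true p q n"
proof (cases "Min (p ` {..<n}) > 0")
  case False
  then show ?thesis using v2_true_nn[OF pnn ps, of q] by (simp add: wA1_def Gstar_inf)
next
  case True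
  let ?pm = "Min (p ` {..<n})" and ?pM = "Max (p ` {..<n})"
  define g where "g = ?pM / ?pm"
  define R where "R = rangeR q n"
  define m where "m = mu_true p q n"
  have n0: "0 < n" using n2 by simp
  have pm: "?pm \<le> p j" "p j \<le> ?pM" if "j < n" for j using that by auto
  have w: "wA1 p q n = R^2 / (real n * g)^3"
    unfolding wA1_def Gstar_cases[OF True] g_def R_def by simp
  have pmpM: "?pm \<le> ?pM" using pm[OF n0] by linarith
  have "1 = (\<Sum>j<n. p j)" using ps by simp
  also have "\<dots> \<le> (\<Sum>j<n. ?pM)" using pm by (intro sum_mono) auto
  finally have npM: "1 \<le> real n * ?pM" by simp
  have ng: "real n * g * ?pm = real n * ?pM" unfolding g_def using True by simp
  have g1: "1 \<le> g" unfolding g_def using True pmpM by (simp add: le_divide_eq)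
  have ng1: "1 \<le> real n * g"
    using mult_mono[of 1 "real n" 1 g] g1 n0 by simp
  have key: "?pm * R^2 / 2 \<le> v2_true p q n"
  proof -
    obtain j0 where j0: "j0 < n" "q j0 = qs q n 0" using qs_mem[OF n0, of q] by metis
    obtain j1 where j1: "j1 < n" "q j1 = qs q n (n - 1)" using qs_mem[of "n-1" n q] n0 by (metis diff_less zero_less_one)
    show ?thesis
    proof (cases "j0 = j1")
      case True
      then have "R = 0" unfolding R_def rangeR_def using j0 j1 by simp
      then show ?thesis using v2_true_nn[OF pnn ps, of q] by simp
    next
      case False
      have "?pm * R^2 / 2 \<le> ?pm * ((q j0 - m)^2 + (q j1 - m)^2)"
      proof -
        have "R = (q j1 - m) - (q j0 - m)" unfolding R_def rangeR_def using j0 j1 by simp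
        then have X: "R^2 / 2 \<le> (q j0 - m)^2 + (q j1 - m)^2" using sq_aux[of "q j1 - m" "q j0 - m"] by simp
        have "?pm * (R^2 / 2) \<le> ?pm * ((q j0 - m)^2 + (q j1 - m)^2)"
          using True X by (intro mult_left_mono) auto
        then show ?thesis by simp
      qed
      also have "\<dots> \<le> p j0 * (q j0 - m)^2 + p j1 * (q j1 - m)^2"
        using pm[OF j0(1)] pm[OF j1(1)] by (simp add: distrib_left add_mono mult_right_mono)
      also have "\<dots> = (\<Sum>j\<in>{j0, j1}. p j * (q j - m)^2)" using False by simp
      also have "\<dots> \<le> (\<Sum>j<n. p j * (q j - m)^2)"
        using j0 j1 pnn by (intro sum_mono2) auto
      also have "\<dots> = v2_true p q n" unfolding m_def by (rule v2_true_eq[OF ps, symmetric])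
      finally show ?thesis .
    qed
  qed
  have "R^2 / (real n * g)^3 \<le> R^2 / (real n * g)"
  proof (rule divide_left_mono)
    have "1 \<le> (real n * g)^2" using ng1 by (rule one_le_power)
    then have "real n * g * 1 \<le> real n * g * (real n * g)^2" using ng1 by (intro mult_left_mono) auto
    then show "real n * g \<le> (real n * g)^3" by (simp add: power2_eq_square power3_eq_cube)
  qed (use ng1 in auto)
  also have "R^2 / (real n * g) \<le> ?pm * R^2"
  proof -
    have "?pm * R^2 * (real n * g) = R^2 * (real n * g * ?pm)" by (simp add: ac_simps)
    also have "\<dots> = R^2 * (real n * ?pM)" using ng by simp
    finally have "?pm * R^2 * (real n * g) = R^2 * (real n * ?pM)" .
    moreover have "R^2 * 1 \<le> R^2 * (real n * ?pM)" using npM by (intro mult_left_mono) auto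
    ultimately have "R^2 \<le> ?pm * R^2 * (real n * g)" by (simp only: mult_1_right)
    then show ?thesis using ng1 by (simp add: divide_le_eq)
  qed
  finally show ?thesis using w key by simp
qed



lemma gap_ineq:
  fixes I :: nat and muG muT vG vT :: "nat \<Rightarrow> real" and W a :: real
  assumes mu: "\<And>i. i < I \<Longrightarrow> muT i \<le> muG i"
    and W: "0 < W" and sW: "W / 2 \<le> (\<Sum>i<I. vT i)"
    and a: "0 \<le> a" and vG0: "0 \<le> (\<Sum>i<I. vG i)"
    and A2: "let A = {i. i < I \<and> vT i > vG i};
                 Dmu = (\<Sum>i\<in>A. muG i - muT i) / real (card A);
                 Dv = (\<Sum>i\<in>A. vT i - vG i) / real (card A)
             in A = {} \<or> Dmu / Dv * sqrt W > a * sqrt 2"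
  shows "a * sqrt (\<Sum>i<I. vT i) \<le> a * sqrt (\<Sum>i<I. vG i) + (\<Sum>i<I. muG i - muT i)"
proof -
  define s where "s = sqrt (\<Sum>i<I. vT i)"
  define \<sigma> where "\<sigma> = sqrt (\<Sum>i<I. vG i)"
  define \<Delta> where "\<Delta> = (\<Sum>i<I. muG i - muT i)"
  define A where "A = {i. i < I \<and> vT i > vG i}"
  have Delta0: "0 \<le> \<Delta>" unfolding \<Delta>_def using mu by (intro sum_nonneg) auto
  have finA: "finite A" unfolding A_def by auto
  have AI: "A \<subseteq> {..<I}" unfolding A_def by auto
  show ?thesis
  proof (cases "s \<le> \<sigma>")
    case True
    then have "a * s \<le> a * \<sigma>" using a by (intro mult_left_mono)
    then show ?thesis using Delta0 unfolding s_def \<sigma>_def \<Delta>_def by linarith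
  next
    case False
    have sT: "s^2 = (\<Sum>i<I. vT i)" unfolding s_def using sW W by simp
    have spos: "0 < s" unfolding s_def using sW W by simp
    have sig0: "0 \<le> \<sigma>" unfolding \<sigma>_def using vG0 by simp
    have sig2: "(\<Sum>i<I. vG i) \<le> \<sigma>^2"
      unfolding \<sigma>_def using vG0 by simp
    have Ane: "A \<noteq> {}"
    proof
      assume "A = {}"
      then have "\<And>i. i < I \<Longrightarrow> vT i \<le> vG i" unfolding A_def by auto
      then have "(\<Sum>i<I. vT i) \<le> (\<Sum>i<I. vG i)" by (intro sum_mono) auto
      then have "s \<le> \<sigma>" unfolding s_def \<sigma>_def by simp
      then show False using False by simp
    qed
    define SMu where "SMu = (\<Sum>i\<in>A. muG i - muT i)"
    define SV where "SV = (\<Sum>i\<in>A. vT i - vG i)"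
    have k: "0 < real (card A)" using finA Ane by (simp add: card_gt_0_iff)
    have SVpos: "0 < SV" unfolding SV_def using finA Ane by (intro sum_pos) (auto simp: A_def)
    have ratio: "SMu / SV * sqrt W > a * sqrt 2"
    proof -
      have e: "(SMu / real (card A)) / (SV / real (card A)) = SMu / SV" using k by simp
      have "(SMu / real (card A)) / (SV / real (card A)) * sqrt W > a * sqrt 2"
        using A2 Ane unfolding A_def[symmetric] Let_def SMu_def[symmetric] SV_def[symmetric] by simp
      then show ?thesis unfolding e .
    qed
    have sqW: "0 < sqrt W" using W by simp
    have rpos: "0 < SMu / SV"
    proof (rule ccontr)
      assume "\<not> 0 < SMu / SV"
      then have "SMu / SV \<le> 0" by simp
      then have "SMu / SV * sqrt W \<le> 0" using sqW by (intro mult_nonpos_nonneg) auto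
      moreover have "0 \<le> a * sqrt 2" using a by simp
      ultimately show False using ratio by linarith
    qed
    have ssq: "sqrt W / sqrt 2 \<le> s"
      unfolding s_def using sW by (simp add: real_sqrt_divide[symmetric])
    define r where "r = SMu / SV"
    have "a * sqrt 2 \<le> r * sqrt W" using ratio unfolding r_def by simp
    then have "a \<le> r * sqrt W / sqrt 2" by (simp only: pos_le_divide_eq[OF real_sqrt_gt_zero[OF zero_less_numeral]])
    also have "\<dots> = r * (sqrt W / sqrt 2)" by simp
    also have "\<dots> \<le> r * s" using rpos ssq unfolding r_def[symmetric] by (intro mult_left_mono) auto
    finally have "a \<le> SMu / SV * s" unfolding r_def .
    then have aSV: "a * SV \<le> SMu * s" using SVpos by (simp add: divide_le_eq field_simps)
    have DSMu: "SMu \<le> \<Delta>"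
      unfolding SMu_def \<Delta>_def using mu AI by (intro sum_mono2) auto
    have vdiff: "(\<Sum>i<I. vT i) - (\<Sum>i<I. vG i) \<le> SV"
    proof -
      have "(\<Sum>i<I. vT i) - (\<Sum>i<I. vG i) = (\<Sum>i<I. vT i - vG i)" by (simp add: sum_subtractf)
      also have "\<dots> = (\<Sum>i\<in>A. vT i - vG i) + (\<Sum>i\<in>{..<I} - A. vT i - vG i)"
        using AI by (metis add.commute finite_lessThan sum.subset_diff)
      also have "(\<Sum>i\<in>{..<I} - A. vT i - vG i) \<le> 0"
        by (intro sum_nonpos) (auto simp: A_def)
      finally show ?thesis unfolding SV_def by simp
    qed
    have "a * (s - \<sigma>) * s \<le> a * ((s - \<sigma>) * (s + \<sigma>))"
      using a False sig0 by (simp add: mult_left_mono mult.assoc)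
    also have "\<dots> = a * (s^2 - \<sigma>^2)" by (simp add: power2_eq_square algebra_simps)
    also have "\<dots> \<le> a * SV"
      using a sT sig2 vdiff by (intro mult_left_mono) auto
    also have "\<dots> \<le> \<Delta> * s" using aSV DSMu spos by (meson mult_right_mono less_imp_le order.trans)
    finally have "a * (s - \<sigma>) \<le> \<Delta>" using spos by simp
    then show ?thesis unfolding s_def[symmetric] \<sigma>_def[symmetric] \<Delta>_def[symmetric] by (simp add: algebra_simps)
  qed
qed



lemma Phi_eq: "Phi = cdf std_normal_distribution" by (rule ext) (simp add: Phi_def)

lemma Phi_mono: "x \<le> y \<Longrightarrow> Phi x \<le> Phi y"
proof -
  interpret real_distribution std_normal_distribution by (rule real_dist_normal_dist)
  assume "x \<le> y" then show ?thesis unfolding Phi_eq by (rule cdf_nondecreasing)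
qed

lemma Phi_cont: "isCont Phi x" unfolding Phi_eq by (rule isCont_Phi)

lemma Phi_quantile:
  fixes \<alpha> :: real assumes "0 < \<alpha>" "\<alpha> < 1"
  shows "\<exists>z0. 1 - \<alpha> \<le> Phi z0 \<and> (\<forall>y. 1 - \<alpha> \<le> Phi y \<longrightarrow> z0 \<le> y)"
proof -
  interpret real_distribution std_normal_distribution by (rule real_dist_normal_dist)
  define S where "S = {y. 1 - \<alpha> \<le> Phi y}"
  have top: "(Phi \<longlongrightarrow> 1) at_top" unfolding Phi_eq by (rule cdf_lim_at_top_prob)
  have bot: "(Phi \<longlongrightarrow> 0) at_bot" unfolding Phi_eq by (rule cdf_lim_at_bot)
  have "eventually (\<lambda>y. Phi y > 1 - \<alpha>) at_top"
    using order_tendstoD(1)[OF top] assms by simp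
  then obtain y where "Phi y > 1 - \<alpha>" by (metis eventually_at_top_linorder order_refl)
  then have Sne: "S \<noteq> {}" unfolding S_def by (auto intro: less_imp_le)
  have "eventually (\<lambda>y. Phi y < 1 - \<alpha>) at_bot"
    using order_tendstoD(2)[OF bot] assms by simp
  then obtain b where b: "\<And>y. y \<le> b \<Longrightarrow> Phi y < 1 - \<alpha>" by (metis eventually_at_bot_linorder)
  have bdd: "bdd_below S"
  proof (rule bdd_belowI)
    fix y assume "y \<in> S"
    then show "b \<le> y" using b[of y] unfolding S_def by force
  qed
  define z0 where "z0 = Inf S"
  have low: "z0 \<le> y" if "1 - \<alpha> \<le> Phi y" for y
    unfolding z0_def using that bdd by (intro cInf_lower) (auto simp: S_def)
  have "1 - \<alpha> \<le> Phi z0"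
  proof (rule ccontr)
    assume c: "\<not> 1 - \<alpha> \<le> Phi z0"
    then have r: "0 < (1 - \<alpha>) - Phi z0" by simp
    from LIM_D[OF Phi_cont[of z0, unfolded isCont_def] r]
    obtain e where e: "0 < e" "\<And>x. x \<noteq> z0 \<and> norm (x - z0) < e \<Longrightarrow> norm (Phi x - Phi z0) < (1 - \<alpha>) - Phi z0"
      by blast
    have "Inf S < z0 + e" using e(1) unfolding z0_def by simp
    then obtain y where y: "y \<in> S" "y < z0 + e" using cInf_less_iff[OF Sne bdd] by blast
    have yz: "z0 \<le> y" using y(1) low unfolding S_def by auto
    have "y \<noteq> z0" using y(1) c unfolding S_def by auto
    then have "norm (Phi y - Phi z0) < (1 - \<alpha>) - Phi z0" using e(2)[of y] y(2) yz by auto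
    then have "Phi y < 1 - \<alpha>" by simp
    then show False using y(1) unfolding S_def by simp
  qed
  then show ?thesis using low by blast
qed



theorem corollaryA1:
  fixes n :: "nat \<Rightarrow> nat \<Rightarrow> nat"
    and p q :: "nat \<Rightarrow> nat \<Rightarrow> nat \<Rightarrow> real"
    and G :: "nat \<Rightarrow> nat \<Rightarrow> ereal"
    and \<alpha> :: real
  assumes n_ge2: "\<And>I i. i < I \<Longrightarrow> 2 \<le> n I i"
    and p_nonneg: "\<And>I i j. i < I \<Longrightarrow> j < n I i \<Longrightarrow> 0 \<le> p I i j"
    and p_sum: "\<And>I i. i < I \<Longrightarrow> (\<Sum>j<n I i. p I i j) = 1"
    and Gstar_le: "\<And>I i. i < I \<Longrightarrow> Gstar (p I i) (n I i) \<le> G I i"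
    and A1_pos: "eventually (\<lambda>I. (\<Sum>i<I. wA1 (p I i) (q I i) (n I i)) > 0) sequentially"
    and A1: "(\<lambda>I. Max ((\<lambda>i. (rangeR (q I i) (n I i))\<^sup>2) ` {..<I})
                  / (\<Sum>i<I. wA1 (p I i) (q I i) (n I i))) \<longlonglongrightarrow> 0"
    and A2: "\<And>M::real. eventually (\<lambda>I.
              let A = {i. i < I \<and> v2_true (p I i) (q I i) (n I i) > v2_G (q I i) (n I i) (G I i)};
                  Dmu = (\<Sum>i\<in>A. mu_G (q I i) (n I i) (G I i) - mu_true (p I i) (q I i) (n I i))
                          / real (card A);
                  Dv = (\<Sum>i\<in>A. v2_true (p I i) (q I i) (n I i) - v2_G (q I i) (n I i) (G I i))
                          / real (card A)
              in A = {} \<or> Dmu / Dv * sqrt (\<Sum>i<I. wA1 (p I i) (q I i) (n I i)) > M) sequentially"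
    and \<alpha>: "0 < \<alpha>" "\<alpha> < 1"
  shows "limsup (\<lambda>I. ereal
           (\<Sum>z\<in>PiE {..<I} (\<lambda>i. {..<n I i}).
              (\<Prod>i<I. p I i (z i)) *
              (let T = (\<Sum>i<I. q I i (z i));
                   mu = (\<Sum>i<I. mu_G (q I i) (n I i) (G I i));
                   sigma = sqrt (\<Sum>i<I. v2_G (q I i) (n I i) (G I i));
                   pt = 1 - Phi ((T - mu) / sigma) * (if T \<ge> mu then 1 else 0)
               in if pt \<le> \<alpha> then 1 else 0)))
         \<le> ereal \<alpha>"
proof -
  define W where "W I = (\<Sum>i<I. wA1 (p I i) (q I i) (n I i))" for I
  define vT where "vT I i = v2_true (p I i) (q I i) (n I i)" for I i
  define muT where "muT I i = mu_true (p I i) (q I i) (n I i)" for I i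
  define s where "s I = sqrt (\<Sum>i<I. vT I i)" for I
  define d where "d I i j = q I i j - muT I i" for I i j
  define R where "R I i = rangeR (q I i) (n I i)" for I i
  define Rm where "Rm I = Max ((\<lambda>i. (R I i)^2) ` {..<I})" for I
  define Y where "Y I z = (\<Sum>i<I. d I i (z i)) / s I" for I z
  define \<Omega> where "\<Omega> I = PiE {..<I} (\<lambda>i. {..<n I i})" for I
  define w where "w I z = (\<Prod>i<I. p I i (z i))" for I z
  define ev where "ev I z = (let T = (\<Sum>i<I. q I i (z i));
                   mu = (\<Sum>i<I. mu_G (q I i) (n I i) (G I i));
                   sigma = sqrt (\<Sum>i<I. v2_G (q I i) (n I i) (G I i));
                   pt = 1 - Phi ((T - mu) / sigma) * (if T \<ge> mu then 1 else 0)
               in pt \<le> \<alpha>)" for I z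
  define E where "E I = (\<Sum>z\<in>\<Omega> I. w I z * (if ev I z then 1 else 0))" for I
  define F where "F I x = (\<Sum>z\<in>\<Omega> I. w I z * (if Y I z \<le> x then 1 else 0))" for I x

  have n0: "0 < n I i" if "i < I" for I i using n_ge2[OF that] by simp
  have vT_nn: "0 \<le> vT I i" if "i < I" for I i
    unfolding vT_def using p_nonneg[OF that] p_sum[OF that] by (rule v2_true_nn)
  have sumvT_nn: "0 \<le> (\<Sum>i<I. vT I i)" for I using vT_nn by (intro sum_nonneg) auto
  have sumvT: "W I / 2 \<le> (\<Sum>i<I. vT I i)" for I
  proof -
    have "W I / 2 = (\<Sum>i<I. wA1 (p I i) (q I i) (n I i) / 2)" unfolding W_def by (simp add: sum_divide_distrib)
    also have "\<dots> \<le> (\<Sum>i<I. vT I i)"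
      unfolding vT_def using n_ge2 p_nonneg p_sum by (intro sum_mono v2_true_ge) auto
    finally show ?thesis .
  qed
  have s2: "(s I)^2 = (\<Sum>i<I. vT I i)" for I unfolding s_def using sumvT_nn by simp
  have sdef: "(s I)^2 = (\<Sum>i<I. \<Sum>j<n I i. p I i j * (d I i j)^2)" for I
    unfolding s2 vT_def d_def muT_def using p_sum by (intro sum.cong refl v2_true_eq) auto
  have spos: "eventually (\<lambda>I. 0 < s I) sequentially"
    using A1_pos
  proof eventually_elim
    case (elim I)
    then show ?case using sumvT[of I] unfolding s_def W_def[symmetric] by simp
  qed
  have lim: "(\<lambda>I. Rm I / (s I)^2) \<longlonglongrightarrow> 0"
  proof (rule tendsto_sandwich[where f="\<lambda>I. 0" and h="\<lambda>I. 2 * (Rm I / W I)"])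
    have A1': "(\<lambda>I. Rm I / W I) \<longlonglongrightarrow> 0" using A1 unfolding Rm_def R_def W_def .
    show "(\<lambda>I. 2 * (Rm I / W I)) \<longlonglongrightarrow> 0" using tendsto_mult_right_zero[OF A1', of 2] by simp
    show "(\<lambda>I. 0::real) \<longlonglongrightarrow> 0" by simp
    have ev1: "eventually (\<lambda>I. 0 < W I) sequentially" using A1_pos unfolding W_def .
    show "eventually (\<lambda>I. 0 \<le> Rm I / (s I)^2) sequentially"
      using ev1
    proof eventually_elim
      case (elim I)
      then have "I \<noteq> 0" unfolding W_def by (cases I) auto
      then have "(R I 0)^2 \<le> Rm I" unfolding Rm_def by (auto intro!: Max_ge)
      then have "0 \<le> Rm I" using zero_le_power2[of "R I 0"] by linarith
      then show ?case by simp
    qed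
    show "eventually (\<lambda>I. Rm I / (s I)^2 \<le> 2 * (Rm I / W I)) sequentially"
      using ev1
    proof eventually_elim
      case (elim I)
      then have "I \<noteq> 0" unfolding W_def by (cases I) auto
      then have Rm0: "0 \<le> Rm I" using order_trans[OF zero_le_power2[of "R I 0"]] unfolding Rm_def by (auto intro!: Max_ge)
      have "Rm I / (s I)^2 \<le> Rm I / (W I / 2)"
        unfolding s2 using elim sumvT[of I] Rm0 by (intro divide_left_mono) auto
      also have "Rm I / (W I / 2) = 2 * (Rm I / W I)" by simp
      finally show ?case .
    qed
  qed
  have clt: "(\<lambda>I. F I x) \<longlonglongrightarrow> Phi x" for x
    unfolding F_def \<Omega>_def w_def Y_def
  proof (rule clt_cdf_lim[where R=R and Rm=Rm])
    show "0 \<le> p I i j" if "i < I" "j < n I i" for I i j using p_nonneg that .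
    show "(\<Sum>j<n I i. p I i j) = 1" if "i < I" for I i using p_sum that .
    show "(\<Sum>j<n I i. p I i j * d I i j) = 0" if i: "i < I" for I i
    proof -
      have "(\<Sum>j<n I i. p I i j * d I i j) = (\<Sum>j<n I i. p I i j * q I i j) - (\<Sum>j<n I i. p I i j) * muT I i"
        unfolding d_def by (simp add: algebra_simps sum_subtractf sum_distrib_right sum_distrib_left)
      then show ?thesis using p_sum[OF i] unfolding muT_def mu_true_def by simp
    qed
    show "\<bar>d I i j\<bar> \<le> R I i" if "i < I" "j < n I i" for I i j
      unfolding d_def muT_def R_def using p_nonneg[OF that(1)] p_sum[OF that(1)] that(2) by (rule d_bound)
    show "(R I i)^2 \<le> Rm I" if "i < I" for I i unfolding Rm_def using that by (intro Max_ge) auto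
    show "0 \<le> R I i" if "i < I" for I i unfolding R_def using n0[OF that] by (rule rangeR_nn)
  qed (fact sdef spos lim)+
  obtain z0 where z0: "1 - \<alpha> \<le> Phi z0" "\<And>y. 1 - \<alpha> \<le> Phi y \<Longrightarrow> z0 \<le> y"
    using Phi_quantile[OF \<alpha>] by blast
  define a where "a = max z0 0"
  have a0: "0 \<le> a" unfolding a_def by simp
  have Phia: "1 - \<alpha> \<le> Phi a" using z0(1) Phi_mono[of z0 a] unfolding a_def by simp
  have wsum: "(\<Sum>z\<in>\<Omega> I. w I z) = 1" for I
  proof -
    have "(\<Sum>z\<in>\<Omega> I. w I z) = (\<Prod>i<I. \<Sum>j<n I i. p I i j)"
      unfolding \<Omega>_def w_def by (rule prod_sum_PiE[symmetric]) auto
    also have "\<dots> = 1" using p_sum by simp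
    finally show ?thesis .
  qed
  have wnn: "0 \<le> w I z" if "z \<in> \<Omega> I" for I z
    using that p_nonneg unfolding w_def \<Omega>_def by (intro prod_nonneg) (auto simp: PiE_iff)
  have key: "eventually (\<lambda>I. \<forall>z\<in>\<Omega> I. ev I z \<longrightarrow> a \<le> Y I z) sequentially"
    using A1_pos A2[of "a * sqrt 2"] spos
  proof eventually_elim
    case (elim I)
    show ?case
    proof (intro ballI impI)
      fix z assume z: "z \<in> \<Omega> I" and evz: "ev I z"
      define T where "T = (\<Sum>i<I. q I i (z i))"
      define mu where "mu = (\<Sum>i<I. mu_G (q I i) (n I i) (G I i))"
      define \<sigma> where "\<sigma> = sqrt (\<Sum>i<I. v2_G (q I i) (n I i) (G I i))"
      define \<Delta> where "\<Delta> = (\<Sum>i<I. mu_G (q I i) (n I i) (G I i) - mu_true (p I i) (q I i) (n I i))"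
      have pt: "1 - Phi ((T - mu) / \<sigma>) * (if T \<ge> mu then 1 else 0) \<le> \<alpha>"
        using evz unfolding ev_def T_def mu_def \<sigma>_def Let_def .
      have Tmu: "mu \<le> T"
      proof (rule ccontr)
        assume "\<not> mu \<le> T" then show False using pt \<alpha> by simp
      qed
      have Ph: "1 - \<alpha> \<le> Phi ((T - mu) / \<sigma>)" using pt Tmu by simp
      have zle: "z0 \<le> (T - mu) / \<sigma>" by (rule z0(2)[OF Ph])
      have Delta0: "0 \<le> \<Delta>" unfolding \<Delta>_def
        using n_ge2 p_nonneg p_sum Gstar_le by (intro sum_nonneg) (auto intro!: mu_true_le_mu_G simp del: diff_ge_0_iff_ge simp: le_diff_eq)
      have c1: "a * \<sigma> \<le> T - mu"
      proof (cases "0 < \<sigma>")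
        case True
        then have "z0 * \<sigma> \<le> T - mu" using zle by (simp add: le_divide_eq)
        then show ?thesis using Tmu unfolding a_def by (cases "z0 \<le> 0") (auto simp: max_def)
      next
        case False
        then have "(T - mu) / \<sigma> \<le> 0" using Tmu by (simp add: divide_nonneg_nonpos)
        then have "z0 \<le> 0" using zle by simp
        then have "a = 0" unfolding a_def by simp
        then show ?thesis using Tmu by simp
      qed
      have c2: "a * s I \<le> a * \<sigma> + \<Delta>"
      proof (cases "a = 0")
        case True then show ?thesis using Delta0 by simp
      next
        case False
        then have az: "a = z0" "0 < z0" unfolding a_def by (auto simp: max_def split: if_splits)
        have sig0: "0 \<le> \<sigma>"
        proof (rule ccontr)
          assume "\<not> 0 \<le> \<sigma>"
          then have "(T - mu) / \<sigma> \<le> 0" using Tmu by (simp add: divide_nonneg_nonpos)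
          then show False using zle az by simp
        qed
        then have vG0: "0 \<le> (\<Sum>i<I. v2_G (q I i) (n I i) (G I i))" unfolding \<sigma>_def by simp
        have "a * sqrt (\<Sum>i<I. v2_true (p I i) (q I i) (n I i)) \<le>
              a * sqrt (\<Sum>i<I. v2_G (q I i) (n I i) (G I i)) +
              (\<Sum>i<I. mu_G (q I i) (n I i) (G I i) - mu_true (p I i) (q I i) (n I i))"
        proof (rule gap_ineq[where W="W I"])
          show "mu_true (p I i) (q I i) (n I i) \<le> mu_G (q I i) (n I i) (G I i)" if "i < I" for i
            using n_ge2[OF that] p_nonneg[OF that] p_sum[OF that] Gstar_le[OF that] by (rule mu_true_le_mu_G)
          show "0 < W I" using elim(1) unfolding W_def .
          show "W I / 2 \<le> (\<Sum>i<I. v2_true (p I i) (q I i) (n I i))" using sumvT[of I] unfolding vT_def .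
        qed (use a0 vG0 elim(2) in \<open>simp_all add: W_def\<close>)
        then show ?thesis unfolding s_def vT_def \<sigma>_def \<Delta>_def .
      qed
      have sumd: "(\<Sum>i<I. d I i (z i)) = (T - mu) + \<Delta>"
        unfolding d_def muT_def T_def mu_def \<Delta>_def by (simp add: sum_subtractf)
      have "a * s I \<le> (\<Sum>i<I. d I i (z i))" unfolding sumd using c1 c2 by linarith
      then show "a \<le> Y I z" unfolding Y_def using elim(3) by (simp add: pos_le_divide_eq)
    qed
  qed
  have bound: "eventually (\<lambda>I. E I \<le> 1 - F I (a - \<delta>)) sequentially" if \<delta>: "0 < \<delta>" for \<delta>
    using key
  proof eventually_elim
    case (elim I)
    have "E I \<le> (\<Sum>z\<in>\<Omega> I. w I z * (1 - (if Y I z \<le> a - \<delta> then 1 else 0)))"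
      unfolding E_def
    proof (rule sum_mono)
      fix z assume z: "z \<in> \<Omega> I"
      have "(if ev I z then 1 else 0) \<le> (1 - (if Y I z \<le> a - \<delta> then 1 else 0) :: real)"
        using elim z \<delta> by auto
      then show "w I z * (if ev I z then 1 else 0) \<le> w I z * (1 - (if Y I z \<le> a - \<delta> then 1 else 0))"
        using wnn[OF z] by (rule mult_left_mono)
    qed
    also have "\<dots> = 1 - F I (a - \<delta>)"
      unfolding F_def using wsum[of I] by (simp add: right_diff_distrib sum_subtractf)
    finally show ?case .
  qed
  have ls: "limsup (\<lambda>I. ereal (E I)) \<le> ereal (1 - Phi (a - \<delta>))" if \<delta>: "0 < \<delta>" for \<delta>
  proof -
    have "limsup (\<lambda>I. ereal (E I)) \<le> limsup (\<lambda>I. ereal (1 - F I (a - \<delta>)))"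
      by (rule Limsup_mono) (use bound[OF \<delta>] in \<open>auto elim: eventually_mono\<close>)
    also have "limsup (\<lambda>I. ereal (1 - F I (a - \<delta>))) = ereal (1 - Phi (a - \<delta>))"
      by (intro lim_imp_Limsup) (auto intro!: tendsto_intros clt)
    finally show ?thesis .
  qed
  have lim2: "(\<lambda>m. ereal (1 - Phi (a - inverse (real (Suc m))))) \<longlonglongrightarrow> ereal (1 - Phi a)"
  proof -
    have "(\<lambda>m. a - inverse (real (Suc m))) \<longlonglongrightarrow> a - 0"
      by (intro tendsto_diff tendsto_const LIMSEQ_inverse_real_of_nat)
    then have "(\<lambda>m. Phi (a - inverse (real (Suc m)))) \<longlonglongrightarrow> Phi a"
      using isCont_tendsto_compose[OF Phi_cont] by simp
    then show ?thesis by (intro tendsto_intros)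
  qed
  have "limsup (\<lambda>I. ereal (E I)) \<le> ereal (1 - Phi a)"
    by (rule LIMSEQ_le_const[OF lim2]) (use ls in auto)
  also have "\<dots> \<le> ereal \<alpha>" using Phia by simp
  finally have main: "limsup (\<lambda>I. ereal (E I)) \<le> ereal \<alpha>" .
  have Eeq: "(\<Sum>z\<in>PiE {..<I} (\<lambda>i. {..<n I i}).
              (\<Prod>i<I. p I i (z i)) *
              (let T = (\<Sum>i<I. q I i (z i));
                   mu = (\<Sum>i<I. mu_G (q I i) (n I i) (G I i));
                   sigma = sqrt (\<Sum>i<I. v2_G (q I i) (n I i) (G I i));
                   pt = 1 - Phi ((T - mu) / sigma) * (if T \<ge> mu then 1 else 0)
               in if pt \<le> \<alpha> then 1 else 0)) = E I" for I
    unfolding E_def \<Omega>_def w_def ev_def Let_def by simp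
  show ?thesis unfolding Eeq using main .
qed

end
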